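(* Consider a $\delta$-discretized episodic environment with physical time limit $T>0$ and discretization time scale $\delta>0$, so that a rollout has $N = T/\delta$ decision steps, with initial state distribution $p(s_0)$ and (stochastic) transition kernel $p(s_{i+1}\mid s_i,a_i)$, and action space of dimension $K$. Let the policy be $\pi_\theta(a_i\mid s_i) = \mathcal{N}(\mu_{\theta_\mu}(s_i), \Sigma)$, where $\mu_{\theta_\mu}(s) = [\mu_{\theta_\mu,1}(s),\dots,\mu_{\theta_\mu,K}(s)]^\top$ is a neural network with parameters $\theta_\mu$ whose output layer is affine with bias parameters $b_1,\dots,b_K$ (so $\mu_{\theta_\mu}(s) = \mu'(s) + [b_1,\dots,b_K]^\top$ with $b_1,\dots,b_K$ among the entries of $\theta_\mu$ and $\mu'$ not depending on them), and $\Sigma = \mathrm{diag}(\sigma_1^2,\dots,\sigma_K^2)$ with $\sigma_k>0$ learnable and state-independent; the full parameter vector is $\theta = [\theta_\mu^\top, \sigma_1,\dots,\sigma_K]^\top$. Let $\tau=(s_0,a_0,\dots,s_N)$ be distributed as $p_\theta(\tau) = p(s_0)\prod_{i=0}^{N-1}\pi_\theta(a_i\mid s_i)\,p(s_{i+1}\mid s_i,a_i)$, let $R(\tau)$ be its (real-valued) return, and define the policy gradient estimator $$G_\theta(\tau) = \Big(\sum_{i=0}^{N-1}\nabla_\theta \log \pi_\theta(a_i\mid s_i)\Big) R(\tau).$$ Reparameterize the actions as $a_i = \mu_{\theta_\mu}(s_i) + \Sigma^{1/2}\epsilon_i$ with $\epsilon_0,\dots,\epsilon_{N-1}$ i.i.d.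 $\mathcal{N}(0,I_K)$, and let $p_\theta(s_{0:N}\mid \epsilon_{0:N-1})$ denote the induced conditional distribution of the states given the noise. Suppose there is a constant $c>0$ such that for every $\epsilon_{0:N-1}$, $$\mathbb{V}_{s_{0:N}\sim p_\theta(s_{0:N}\mid \epsilon_{0:N-1})}\big[R(\tau)\big] \ge c.$$ Then $$\mathrm{tr}\Big[\mathbb{V}_{\tau\sim p_\theta(\tau)}\big[G_\theta(\tau)\big]\Big] \ \ge\ \frac{Tc}{\delta\cdot \min(\sigma_1^2,\sigma_2^2,\dots,\sigma_K^2)}.$$
   Context: $\mathbb{V}[X]$ denotes the variance of a random variable $X$, or its covariance matrix if $X$ is vector-valued; $\mathrm{tr}$ is the matrix trace. The state sequence $s_{0:N}$ together with the noise $\epsilon_{0:N-1}$ determines the trajectory $\tau$ (hence $R(\tau)$), since actions are functions of states and noise. *)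

theory Defs
  imports "HOL-Probability.Probability"
begin

definition grad :: "('a::real_inner \<Rightarrow> real) \<Rightarrow> 'a \<Rightarrow> 'a" where
  "grad f x = (THE D. GDERIV f x :> D)"

definition ext_variance :: "'a measure \<Rightarrow> ('a \<Rightarrow> real) \<Rightarrow> ennreal" where
  "ext_variance M X =
     (if integrable M X then (\<integral>\<^sup>+ x. ennreal ((X x - (\<integral>y. X y \<partial>M))\<^sup>2) \<partial>M) else \<infinity>)"

definition trace_cov :: "'a measure \<Rightarrow> ('a \<Rightarrow> 'b::euclidean_space) \<Rightarrow> ennreal" where
  "trace_cov M X = (\<Sum>j\<in>Basis. ext_variance M (\<lambda>x. X x \<bullet> j))"

text \<open>Trajectories: states s 0 .. s n and actions a 0 .. a (n-1).\<close>
type_synonym ('s, 'k) traj = "(nat \<Rightarrow> 's) \<times> (nat \<Rightarrow> real ^ 'k)"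

definition trajM :: "'s measure \<Rightarrow> nat \<Rightarrow> ('s, 'k::finite) traj measure" where
  "trajM SM n = (PiM {..n} (\<lambda>_. SM)) \<Otimes>\<^sub>M (PiM {..<n} (\<lambda>_. (borel :: (real ^ 'k) measure)))"

fun traj_measure ::
  "'s measure \<Rightarrow> 's measure \<Rightarrow> (nat \<Rightarrow> 's \<Rightarrow> (real ^ 'k) measure)
   \<Rightarrow> ('s \<Rightarrow> real ^ 'k \<Rightarrow> 's measure) \<Rightarrow> nat \<Rightarrow> ('s, 'k::finite) traj measure" where
  "traj_measure SM p0 pol P 0 =
     distr p0 (trajM SM 0) (\<lambda>s0. (\<lambda>i\<in>{..0}. s0, \<lambda>i\<in>{..<0}. undefined))"
| "traj_measure SM p0 pol P (Suc n) =
     traj_measure SM p0 pol P n \<bind> (\<lambda>(s, a).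
       pol n (s n) \<bind> (\<lambda>a'. P (s n) a' \<bind> (\<lambda>s'.
         return (trajM SM (Suc n)) (s(Suc n := s'), a(n := a')))))"

definition gauss_pol :: "real ^ 'k \<Rightarrow> real ^ 'k \<Rightarrow> (real ^ 'k::finite) measure" where
  "gauss_pol m sig = density lborel (\<lambda>a. \<Prod>k\<in>UNIV. normal_density (m $ k) (sig $ k) (a $ k))"

definition log_pi :: "(real ^ 'p \<Rightarrow> 's \<Rightarrow> real ^ 'k)
   \<Rightarrow> (real ^ 'p) \<times> (real ^ 'k) \<times> (real ^ 'k) \<Rightarrow> 's \<Rightarrow> real ^ 'k::finite \<Rightarrow> real" where
  "log_pi mu' \<theta> s a = (case \<theta> of (\<theta>p, b, sig) \<Rightarrow>
     (\<Sum>k\<in>UNIV. ln (normal_density ((mu' \<theta>p s + b) $ k) (sig $ k) (a $ k))))"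

definition pg_estimator :: "(real ^ 'p \<Rightarrow> 's \<Rightarrow> real ^ 'k)
   \<Rightarrow> (real ^ 'p) \<times> (real ^ 'k) \<times> (real ^ 'k) \<Rightarrow> nat \<Rightarrow> (('s, 'k) traj \<Rightarrow> real)
   \<Rightarrow> ('s, 'k::finite) traj \<Rightarrow> (real ^ 'p) \<times> (real ^ 'k) \<times> (real ^ 'k)" where
  "pg_estimator mu' \<theta> N R \<tau> =
     R \<tau> *\<^sub>R (\<Sum>i<N. grad (\<lambda>th. log_pi mu' th (fst \<tau> i) (snd \<tau> i)) \<theta>)"

end

theory Submission
  imports Defs
begin


lemma prod_Basis_vec:
  fixes f :: "real ^ 'k::finite \<Rightarrow> 'a::comm_monoid_mult"
  shows "(\<Prod>j\<in>Basis. f j) = (\<Prod>i\<in>UNIV. f (axis i 1))"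
proof -
  have B: "Basis = range (\<lambda>i::'k. axis i (1::real))"
    by (auto simp: Basis_vec_def)
  have i: "inj (\<lambda>i::'k. axis i (1::real))"
    by (auto simp: inj_def axis_eq_axis)
  show ?thesis unfolding B prod.reindex[OF i] by (simp add: o_def)
qed

lemma normal_density_shift:
  assumes "s > 0"
  shows "s * normal_density m s (m + s * x) = std_normal_density x"
  using assms by (simp add: normal_density_def real_sqrt_mult power_mult_distrib field_simps)

lemma vec_times_repr:
  fixes s x :: "real ^ 'k::finite"
  shows "(\<Sum>j\<in>Basis. ((s \<bullet> j) * (x \<bullet> j)) *\<^sub>R j) = s * x"
proof -
  have "s * x = (\<Sum>j\<in>Basis. ((s * x) \<bullet> j) *\<^sub>R j)" by (simp add: euclidean_representation)
  also have "\<dots> = (\<Sum>j\<in>Basis. ((s \<bullet> j) * (x \<bullet> j)) *\<^sub>R j)"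
    by (intro sum.cong refl) (auto simp: Basis_vec_def inner_axis)
  finally show ?thesis by simp
qed

lemma gauss_pol_affine:
  fixes m s :: "real ^ 'k::finite"
  assumes s: "\<forall>k. s $ k > 0"
  shows "gauss_pol m s = distr (gauss_pol 0 1) borel (\<lambda>e. m + s * e)"
proof (rule measure_eqI)
  show "sets (gauss_pol m s) = sets (distr (gauss_pol 0 1) borel (\<lambda>e. m + s * e))"
    by (simp add: gauss_pol_def)
next
  fix A assume A: "A \<in> sets (gauss_pol m s)"
  then have A': "A \<in> sets borel" by (simp add: gauss_pol_def)
  define T where "T = (\<lambda>x::real^'k. m + (\<Sum>j\<in>Basis. ((s \<bullet> j) * (x \<bullet> j)) *\<^sub>R j))"
  have T: "T = (\<lambda>x. m + s * x)" unfolding T_def by (simp add: vec_times_repr)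
  have c: "\<And>j. j \<in> (Basis :: (real^'k) set) \<Longrightarrow> s \<bullet> j \<noteq> 0"
    using s by (auto simp: Basis_vec_def inner_axis) (metis less_irrefl)
  have lb: "lborel = density (distr lborel borel T) (\<lambda>_. (\<Prod>j\<in>Basis. \<bar>s \<bullet> j\<bar>))"
    unfolding T_def by (rule lborel_affine_euclidean) (rule c)
  have Tm[measurable]: "T \<in> borel_measurable borel" unfolding T_def by simp
  have "emeasure (gauss_pol m s) A =
    (\<integral>\<^sup>+a. ennreal (\<Prod>k\<in>UNIV. normal_density (m $ k) (s $ k) (a $ k)) * indicator A a \<partial>lborel)"
    using A' by (simp add: gauss_pol_def emeasure_density)
  also have "\<dots> = (\<integral>\<^sup>+a. ennreal (\<Prod>k\<in>UNIV. normal_density (m $ k) (s $ k) (a $ k)) * indicator A a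
      \<partial>(density (distr lborel borel T) (\<lambda>_. (\<Prod>j\<in>Basis. \<bar>s \<bullet> j\<bar>))))"
    using lb by simp
  also have "\<dots> = (\<integral>\<^sup>+x. (\<Prod>j\<in>Basis. \<bar>s \<bullet> j\<bar>) * (ennreal (\<Prod>k\<in>UNIV. normal_density (m $ k) (s $ k) (T x $ k)) * indicator A (T x)) \<partial>lborel)"
    using A' by (simp add: nn_integral_density nn_integral_distr)
  also have "\<dots> = (\<integral>\<^sup>+x. ennreal (\<Prod>k\<in>UNIV. std_normal_density (x $ k)) * indicator ((\<lambda>e. m + s * e) -` A) x \<partial>lborel)"
  proof (intro nn_integral_cong)
    fix x :: "real^'k"
    have "(\<Prod>j\<in>Basis. \<bar>s \<bullet> j\<bar>) * (\<Prod>k\<in>UNIV. normal_density (m $ k) (s $ k) (T x $ k))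
        = (\<Prod>k\<in>UNIV. s $ k * normal_density (m $ k) (s $ k) (m $ k + s $ k * x $ k))"
      using s by (simp add: prod_Basis_vec inner_axis T prod.distrib less_imp_le)
    also have "\<dots> = (\<Prod>k\<in>UNIV. std_normal_density (x $ k))"
      using s by (simp add: normal_density_shift)
    finally have "(\<Prod>j\<in>Basis. \<bar>s \<bullet> j\<bar>) * (\<Prod>k\<in>UNIV. normal_density (m $ k) (s $ k) (T x $ k))
        = (\<Prod>k\<in>UNIV. std_normal_density (x $ k))" .
    then show "ennreal (\<Prod>j\<in>Basis. \<bar>s \<bullet> j\<bar>) * (ennreal (\<Prod>k\<in>UNIV. normal_density (m $ k) (s $ k) (T x $ k)) * indicator A (T x)) =
       ennreal (\<Prod>k\<in>UNIV. std_normal_density (x $ k)) * indicator ((\<lambda>e. m + s * e) -` A) x"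
      by (simp add: T ennreal_mult'[symmetric] mult.assoc[symmetric] prod_nonneg split: split_indicator)
  qed
  also have "\<dots> = emeasure (distr (gauss_pol 0 1) borel (\<lambda>e. m + s * e)) A"
    using A' Tm[unfolded T] measurable_sets[OF Tm[unfolded T] A'] by (simp add: gauss_pol_def emeasure_distr emeasure_density)
  finally show "emeasure (gauss_pol m s) A = emeasure (distr (gauss_pol 0 1) borel (\<lambda>e. m + s * e)) A" .
qed




lemma std_normal_sq_shift:
  "has_bochner_integral lborel (\<lambda>y. std_normal_density y * (x + y)\<^sup>2) (x\<^sup>2 + 1)"
proof -
  have h0: "has_bochner_integral lborel (\<lambda>y. std_normal_density y * y ^ (2 * 0)) 1"
    using std_normal_moment_even[of 0] by simp
  have h1: "has_bochner_integral lborel (\<lambda>y. std_normal_density y * y ^ (2 * 0 + 1)) 0"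
    using std_normal_moment_odd[of 0] by simp
  have h2: "has_bochner_integral lborel (\<lambda>y. std_normal_density y * y ^ (2 * 1)) 1"
    using std_normal_moment_even[of 1] by simp
  have "has_bochner_integral lborel (\<lambda>y. x\<^sup>2 * (std_normal_density y * y ^ (2 * 0))
     + 2 * x * (std_normal_density y * y ^ (2 * 0 + 1)) + std_normal_density y * y ^ (2 * 1))
     (x\<^sup>2 * 1 + 2 * x * 0 + 1)"
    by (intro has_bochner_integral_add has_bochner_integral_mult_right h0 h1 h2)
  then show ?thesis
    by (simp add: power2_eq_square algebra_simps)
qed

lemma nn_std_normal_sq_shift:
  "(\<integral>\<^sup>+y. ennreal (std_normal_density y * (x + y)\<^sup>2) \<partial>lborel) = ennreal (x\<^sup>2 + 1)"
  using std_normal_sq_shift[of x]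
  by (subst nn_integral_eq_integral) (auto simp: has_bochner_integral_iff)

lemma nn_std_normal: "(\<integral>\<^sup>+y. ennreal (std_normal_density y) \<partial>lborel) = 1"
  by (subst nn_integral_eq_integral) auto

lemma gauss_std_sq:
  fixes k :: "'k::finite"
  shows "(\<integral>\<^sup>+e. ennreal ((x + e $ k)\<^sup>2) \<partial>gauss_pol (0::real^'k) 1) = ennreal (x\<^sup>2 + 1)"
proof -
  define f where "f = (\<lambda>(b::real^'k) y. std_normal_density y * (if b = axis k 1 then (x + y)\<^sup>2 else 1))"
  have "(\<integral>\<^sup>+e. ennreal ((x + e $ k)\<^sup>2) \<partial>gauss_pol (0::real^'k) 1)
      = (\<integral>\<^sup>+e. ennreal (\<Prod>i\<in>UNIV. std_normal_density (e $ i)) * ennreal ((x + e $ k)\<^sup>2) \<partial>lborel)"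
    unfolding gauss_pol_def by (subst nn_integral_density) auto
  also have "\<dots> = (\<integral>\<^sup>+e. ennreal (\<Prod>b\<in>Basis. f b (e \<bullet> b)) \<partial>lborel)"
  proof (intro nn_integral_cong)
    fix e :: "real^'k"
    have "(\<Prod>b\<in>Basis. f b (e \<bullet> b)) = (\<Prod>i\<in>UNIV. f (axis i 1) (e $ i))"
      by (simp add: prod_Basis_vec inner_axis)
    also have "\<dots> = (\<Prod>i\<in>UNIV. std_normal_density (e $ i)) * (\<Prod>i\<in>UNIV. (if i = k then (x + e $ i)\<^sup>2 else 1))"
      by (simp add: f_def prod.distrib axis_eq_axis)
    also have "\<dots> = (\<Prod>i\<in>UNIV. std_normal_density (e $ i)) * (x + e $ k)\<^sup>2"
      by (simp add: prod.delta)
    finally show "ennreal (\<Prod>i\<in>UNIV. std_normal_density (e $ i)) * ennreal ((x + e $ k)\<^sup>2) = ennreal (\<Prod>b\<in>Basis. f b (e \<bullet> b))"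
      by (simp add: ennreal_mult'[symmetric] prod_nonneg)
  qed
  also have "\<dots> = (\<Prod>b\<in>Basis. (\<integral>\<^sup>+y. f b y \<partial>lborel))"
    by (subst prod_ennreal[symmetric]) (auto simp: f_def intro!: nn_integral_lborel_prod)
  also have "\<dots> = (\<Prod>i\<in>UNIV. (\<integral>\<^sup>+y. f (axis i 1) y \<partial>lborel))"
    by (simp add: prod_Basis_vec)
  also have "\<dots> = (\<Prod>i\<in>UNIV. (if i = k then ennreal (x\<^sup>2 + 1) else 1))"
    by (intro prod.cong refl) (auto simp: f_def axis_eq_axis nn_std_normal_sq_shift nn_std_normal)
  also have "\<dots> = ennreal (x\<^sup>2 + 1)"
    by (simp add: prod.delta)
  finally show ?thesis .
qed

lemma prob_space_gauss_std: "prob_space (gauss_pol (0::real^'k::finite) 1)"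
proof
  have "emeasure (gauss_pol (0::real^'k::finite) 1) (space (gauss_pol (0::real^'k::finite) 1))
      = (\<integral>\<^sup>+e. ennreal (\<Prod>i\<in>UNIV. std_normal_density ((e::real^'k) $ i)) \<partial>lborel)"
    unfolding gauss_pol_def by (simp add: emeasure_density)
  also have "\<dots> = (\<integral>\<^sup>+e. ennreal (\<Prod>b\<in>(Basis::(real^'k) set). std_normal_density ((e::real^'k) \<bullet> b)) \<partial>lborel)"
    by (simp add: prod_Basis_vec inner_axis)
  also have "\<dots> = (\<integral>\<^sup>+e. (\<Prod>b\<in>(Basis::(real^'k) set). ennreal (std_normal_density ((e::real^'k) \<bullet> b))) \<partial>lborel)"
    by (simp add: prod_ennreal)
  also have "\<dots> = (\<Prod>b\<in>(Basis::(real^'k) set). (\<integral>\<^sup>+y. std_normal_density y \<partial>lborel))"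
    by (rule nn_integral_lborel_prod) auto
  also have "\<dots> = 1" by (simp add: nn_std_normal)
  finally show "emeasure (gauss_pol (0::real^'k::finite) 1) (space (gauss_pol (0::real^'k::finite) 1)) = 1" .
qed




lemma traj_upd_meas:
  assumes f: "f \<in> N \<rightarrow>\<^sub>M trajM SM n" and g: "g \<in> N \<rightarrow>\<^sub>M SM"
    and h: "h \<in> N \<rightarrow>\<^sub>M (borel :: (real^'k::finite) measure)"
  shows "(\<lambda>z. ((fst (f z))(Suc n := g z), (snd (f z))(n := h z))) \<in> N \<rightarrow>\<^sub>M (trajM SM (Suc n) :: ('s, 'k) traj measure)"
  unfolding trajM_def
proof (rule measurable_Pair)
  have f1: "(\<lambda>z. fst (f z)) \<in> N \<rightarrow>\<^sub>M PiM {..n} (\<lambda>_. SM)"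
    using f unfolding trajM_def by (rule measurable_compose[OF _ measurable_fst])
  have f2: "(\<lambda>z. snd (f z)) \<in> N \<rightarrow>\<^sub>M PiM {..<n} (\<lambda>_. (borel :: (real^'k) measure))"
    using f unfolding trajM_def by (rule measurable_compose[OF _ measurable_snd])
  show "(\<lambda>z. (fst (f z))(Suc n := g z)) \<in> N \<rightarrow>\<^sub>M PiM {..Suc n} (\<lambda>_. SM)"
    by (rule measurable_fun_upd[OF _ f1 g]) auto
  show "(\<lambda>z. (snd (f z))(n := h z)) \<in> N \<rightarrow>\<^sub>M PiM {..<Suc n} (\<lambda>_. (borel :: (real^'k) measure))"
    by (rule measurable_fun_upd[OF _ f2 h]) auto
qed

lemma traj_state_meas:
  assumes "i \<le> n"
  shows "(\<lambda>\<tau>. fst \<tau> i) \<in> (trajM SM n :: ('s, 'k::finite) traj measure) \<rightarrow>\<^sub>M SM"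
  unfolding trajM_def
  by (rule measurable_compose[OF measurable_fst measurable_component_singleton]) (use assms in auto)

lemma traj_act_meas:
  assumes "i < n"
  shows "(\<lambda>\<tau>. snd \<tau> i) \<in> (trajM SM n :: ('s, 'k::finite) traj measure) \<rightarrow>\<^sub>M borel"
  unfolding trajM_def
  by (rule measurable_compose[OF measurable_snd measurable_component_singleton]) (use assms in auto)

lemma traj_kernel_meas:
  fixes X :: "'x measure" and pol :: "'x \<Rightarrow> 's \<Rightarrow> (real^'k::finite) measure"
  assumes pol: "(\<lambda>(x, s). pol x s) \<in> X \<Otimes>\<^sub>M SM \<rightarrow>\<^sub>M prob_algebra borel"
    and P: "(\<lambda>(s, a). P s a) \<in> SM \<Otimes>\<^sub>M borel \<rightarrow>\<^sub>M prob_algebra SM"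
  shows "(\<lambda>y. pol (fst y) (fst (snd y) n) \<bind> (\<lambda>a'. P (fst (snd y) n) a' \<bind> (\<lambda>s'.
       return (trajM SM (Suc n)) ((fst (snd y))(Suc n := s'), (snd (snd y))(n := a')))))
     \<in> X \<Otimes>\<^sub>M (trajM SM n :: ('s, 'k) traj measure) \<rightarrow>\<^sub>M prob_algebra (trajM SM (Suc n))"
proof (rule measurable_bind_prob_space2)
  have sn: "(\<lambda>y. fst (snd y) n) \<in> X \<Otimes>\<^sub>M (trajM SM n :: ('s, 'k) traj measure) \<rightarrow>\<^sub>M SM"
    by (rule measurable_compose[OF measurable_snd traj_state_meas]) simp
  have "(\<lambda>y. (fst y, fst (snd y) n)) \<in> X \<Otimes>\<^sub>M (trajM SM n :: ('s, 'k) traj measure) \<rightarrow>\<^sub>M X \<Otimes>\<^sub>M SM"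
    by (rule measurable_Pair[OF measurable_fst sn])
  from measurable_compose[OF this pol]
  show "(\<lambda>y. pol (fst y) (fst (snd y) n)) \<in> X \<Otimes>\<^sub>M (trajM SM n :: ('s, 'k) traj measure) \<rightarrow>\<^sub>M prob_algebra borel"
    by simp
  show "(\<lambda>(y, a'). P (fst (snd y) n) a' \<bind> (\<lambda>s'.
       return (trajM SM (Suc n)) ((fst (snd y))(Suc n := s'), (snd (snd y))(n := a'))))
     \<in> (X \<Otimes>\<^sub>M (trajM SM n :: ('s, 'k) traj measure)) \<Otimes>\<^sub>M borel \<rightarrow>\<^sub>M prob_algebra (trajM SM (Suc n))"
    unfolding split_beta'
  proof (rule measurable_bind_prob_space2)
    have "(\<lambda>z. (fst (snd (fst z)) n, snd z)) \<in> (X \<Otimes>\<^sub>M (trajM SM n :: ('s, 'k) traj measure)) \<Otimes>\<^sub>M borel \<rightarrow>\<^sub>M SM \<Otimes>\<^sub>M borel"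
      by (rule measurable_Pair[OF measurable_compose[OF measurable_fst sn] measurable_snd])
    from measurable_compose[OF this P]
    show "(\<lambda>z. P (fst (snd (fst z)) n) (snd z)) \<in> (X \<Otimes>\<^sub>M (trajM SM n :: ('s, 'k) traj measure)) \<Otimes>\<^sub>M borel \<rightarrow>\<^sub>M prob_algebra SM"
      by simp
    have tr: "(\<lambda>w. snd (fst (fst w))) \<in> ((X \<Otimes>\<^sub>M (trajM SM n :: ('s, 'k) traj measure)) \<Otimes>\<^sub>M borel) \<Otimes>\<^sub>M SM \<rightarrow>\<^sub>M trajM SM n"
      by measurable
    have "(\<lambda>w. ((fst (snd (fst (fst w))))(Suc n := snd w), (snd (snd (fst (fst w))))(n := snd (fst w))))
      \<in> ((X \<Otimes>\<^sub>M (trajM SM n :: ('s, 'k) traj measure)) \<Otimes>\<^sub>M borel) \<Otimes>\<^sub>M SM \<rightarrow>\<^sub>M trajM SM (Suc n)"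
      by (rule traj_upd_meas[OF tr]) measurable
    from measurable_compose[OF this measurable_return_prob_space]
    show "(\<lambda>(z, s'). return (trajM SM (Suc n)) ((fst (snd (fst z)))(Suc n := s'), (snd (snd (fst z)))(n := snd z)))
      \<in> ((X \<Otimes>\<^sub>M (trajM SM n :: ('s, 'k) traj measure)) \<Otimes>\<^sub>M borel) \<Otimes>\<^sub>M SM \<rightarrow>\<^sub>M prob_algebra (trajM SM (Suc n))"
      by (simp add: split_beta')
  qed
qed




lemma traj0_in:
  assumes p0: "prob_space p0" "sets p0 = sets SM"
  shows "(traj_measure SM p0 pol P 0 :: ('s, 'k::finite) traj measure) \<in> space (prob_algebra (trajM SM 0))"
proof -
  have "(\<lambda>s0. (\<lambda>i\<in>{..0}. s0, \<lambda>i\<in>{..<0}. undefined)) \<in> SM \<rightarrow>\<^sub>M (trajM SM 0 :: ('s, 'k) traj measure)"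
    unfolding trajM_def
    by (intro measurable_Pair measurable_restrict) auto
  then have m: "(\<lambda>s0. (\<lambda>i\<in>{..0}. s0, \<lambda>i\<in>{..<0}. undefined)) \<in> p0 \<rightarrow>\<^sub>M (trajM SM 0 :: ('s, 'k) traj measure)"
    using p0(2) by (simp cong: measurable_cong_sets)
  show ?thesis
    using prob_space.prob_space_distr[OF p0(1) m]
    by (simp add: space_prob_algebra)
qed

lemma traj_meas_param:
  fixes X :: "'x measure" and pol :: "'x \<Rightarrow> nat \<Rightarrow> 's \<Rightarrow> (real^'k::finite) measure"
  assumes pol: "\<And>i. (\<lambda>(x, s). pol x i s) \<in> X \<Otimes>\<^sub>M SM \<rightarrow>\<^sub>M prob_algebra borel"
    and P: "(\<lambda>(s, a). P s a) \<in> SM \<Otimes>\<^sub>M borel \<rightarrow>\<^sub>M prob_algebra SM"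
    and p0: "prob_space p0" "sets p0 = sets SM"
  shows "(\<lambda>x. traj_measure SM p0 (pol x) P n) \<in> X \<rightarrow>\<^sub>M prob_algebra (trajM SM n :: ('s, 'k) traj measure)"
proof (induction n)
  case 0
  have "(traj_measure SM p0 (pol undefined) P 0 :: ('s, 'k) traj measure) \<in> space (prob_algebra (trajM SM 0))"
    by (rule traj0_in[OF p0])
  from measurable_const[OF this, of X] show ?case by simp
next
  case (Suc n)
  have K: "(\<lambda>y. pol (fst y) n (fst (snd y) n) \<bind> (\<lambda>a'. P (fst (snd y) n) a' \<bind> (\<lambda>s'.
       return (trajM SM (Suc n)) ((fst (snd y))(Suc n := s'), (snd (snd y))(n := a')))))
     \<in> X \<Otimes>\<^sub>M (trajM SM n :: ('s, 'k) traj measure) \<rightarrow>\<^sub>M prob_algebra (trajM SM (Suc n))"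
    using traj_kernel_meas[of "\<lambda>x s. pol x n s" X SM P n, OF pol[of n] P] by simp
  show ?case
    unfolding traj_measure.simps(2)
    by (rule measurable_bind_prob_space2[OF Suc.IH]) (simp add: split_beta' K)
qed




lemma vmul_meas[measurable]:
  fixes s :: "real^'k::finite"
  shows "(\<lambda>x. s * x) \<in> borel_measurable borel"
proof -
  have "(\<lambda>x::real^'k. (\<Sum>j\<in>Basis. ((s \<bullet> j) * (x \<bullet> j)) *\<^sub>R j)) \<in> borel_measurable borel"
    by simp
  then show ?thesis by (simp add: vec_times_repr)
qed

lemma vmul_meas'[measurable (raw)]:
  fixes s :: "real^'k::finite"
  assumes "f \<in> borel_measurable M"
  shows "(\<lambda>x. s * f x) \<in> borel_measurable M"
  using measurable_compose[OF assms vmul_meas] by simp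

lemma Z_in: "gauss_pol (0::real^'k::finite) 1 \<in> space (prob_algebra borel)"
  using prob_space_gauss_std by (simp add: space_prob_algebra gauss_pol_def)

lemma sets_Z[simp, measurable_cong]: "sets (gauss_pol (0::real^'k::finite) 1) = sets borel"
  by (simp add: gauss_pol_def)

lemma gauss_kernel_meas:
  fixes m :: "'s \<Rightarrow> real^'k::finite" and X :: "'x measure"
  assumes m: "m \<in> SM \<rightarrow>\<^sub>M borel" and s: "\<forall>k. \<sigma> $ k > 0"
  shows "(\<lambda>(x, y). gauss_pol (m y) \<sigma>) \<in> X \<Otimes>\<^sub>M SM \<rightarrow>\<^sub>M prob_algebra borel"
proof -
  have "(\<lambda>z. distr (gauss_pol 0 1) borel (\<lambda>e. m (snd z) + \<sigma> * e)) \<in> X \<Otimes>\<^sub>M SM \<rightarrow>\<^sub>M prob_algebra borel"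
  proof (rule measurable_distr_prob_space2)
    show "(\<lambda>z. gauss_pol (0::real^'k) 1) \<in> X \<Otimes>\<^sub>M SM \<rightarrow>\<^sub>M prob_algebra borel"
      by (rule measurable_const[OF Z_in])
    show "(\<lambda>(z, e). m (snd z) + \<sigma> * e) \<in> (X \<Otimes>\<^sub>M SM) \<Otimes>\<^sub>M borel \<rightarrow>\<^sub>M borel"
      using m by measurable
  qed
  then show ?thesis
    using s by (simp add: split_beta' gauss_pol_affine[symmetric])
qed

lemma det_kernel_meas:
  fixes m :: "'s \<Rightarrow> real^'k::finite" and X :: "'x measure"
  assumes m: "m \<in> SM \<rightarrow>\<^sub>M borel" and g: "g \<in> X \<rightarrow>\<^sub>M borel"
  shows "(\<lambda>(x, y). return borel (m y + \<sigma> * g x)) \<in> X \<Otimes>\<^sub>M SM \<rightarrow>\<^sub>M prob_algebra borel"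
proof -
  have "(\<lambda>z. m (snd z) + \<sigma> * g (fst z)) \<in> X \<Otimes>\<^sub>M SM \<rightarrow>\<^sub>M borel"
    using m g by measurable
  from measurable_compose[OF this measurable_return_prob_space]
  show ?thesis by (simp add: split_beta')
qed

lemma traj_local:
  assumes "\<forall>i<n. pol i = pol' i"
  shows "traj_measure SM p0 pol P n = traj_measure SM p0 pol' P n"
  using assms by (induction n) auto

definition EPS :: "(nat \<Rightarrow> real^'k::finite) measure" where
  "EPS = PiM UNIV (\<lambda>_. borel)"

lemma space_EPS[simp]: "space EPS = UNIV"
  by (simp add: EPS_def space_PiM)

lemma upd_meas:
  "(\<lambda>(\<epsilon>, e). \<epsilon>(n := e)) \<in> (EPS :: (nat \<Rightarrow> real^'k::finite) measure) \<Otimes>\<^sub>M borel \<rightarrow>\<^sub>M EPS"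
proof -
  have "(\<lambda>z. (fst z)(n := snd z)) \<in> (EPS :: (nat \<Rightarrow> real^'k::finite) measure) \<Otimes>\<^sub>M borel \<rightarrow>\<^sub>M PiM UNIV (\<lambda>_. borel)"
    by (rule measurable_fun_upd[where J=UNIV]) (auto simp: EPS_def)
  then show ?thesis by (simp add: split_beta' EPS_def)
qed

fun Emix :: "nat \<Rightarrow> (nat \<Rightarrow> real^'k::finite) measure" where
  "Emix 0 = return EPS (\<lambda>_. 0)"
| "Emix (Suc n) = Emix n \<bind> (\<lambda>\<epsilon>. gauss_pol 0 1 \<bind> (\<lambda>e. return EPS (\<epsilon>(n := e))))"

lemma Emix_step_meas:
  "(\<lambda>\<epsilon>. gauss_pol 0 1 \<bind> (\<lambda>e. return EPS (\<epsilon>(n := e)))) \<in> (EPS :: (nat \<Rightarrow> real^'k::finite) measure) \<rightarrow>\<^sub>M prob_algebra EPS"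
proof (rule measurable_bind_prob_space2)
  show "(\<lambda>\<epsilon>. gauss_pol (0::real^'k) 1) \<in> EPS \<rightarrow>\<^sub>M prob_algebra borel"
    by (rule measurable_const[OF Z_in])
  from measurable_compose[OF upd_meas measurable_return_prob_space]
  show "(\<lambda>(\<epsilon>, e). return EPS (\<epsilon>(n := e))) \<in> (EPS :: (nat \<Rightarrow> real^'k::finite) measure) \<Otimes>\<^sub>M borel \<rightarrow>\<^sub>M prob_algebra EPS"
    by (simp add: split_beta')
qed

lemma Emix_in: "(Emix n :: (nat \<Rightarrow> real^'k::finite) measure) \<in> space (prob_algebra EPS)"
proof (induction n)
  case 0
  show ?case by (simp add: space_prob_algebra prob_space_return)
next
  case (Suc n)
  show ?case
    using prob_space_bind'[OF Suc Emix_step_meas] sets_bind'[OF Suc Emix_step_meas]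
    by (simp add: space_prob_algebra)
qed




lemma unit_lift_kernel:
  fixes pol :: "'s \<Rightarrow> (real^'k::finite) measure"
  assumes pol: "pol \<in> SM \<rightarrow>\<^sub>M prob_algebra borel"
    and P: "(\<lambda>(s, a). P s a) \<in> SM \<Otimes>\<^sub>M borel \<rightarrow>\<^sub>M prob_algebra SM"
  shows "(\<lambda>(s, a). pol (s n) \<bind> (\<lambda>a'. P (s n) a' \<bind> (\<lambda>s'.
       return (trajM SM (Suc n)) (s(Suc n := s'), a(n := a')))))
     \<in> (trajM SM n :: ('s, 'k) traj measure) \<rightarrow>\<^sub>M prob_algebra (trajM SM (Suc n))"
proof -
  have p': "(\<lambda>(x, s). pol s) \<in> (count_space UNIV :: unit measure) \<Otimes>\<^sub>M SM \<rightarrow>\<^sub>M prob_algebra borel"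
    using measurable_compose[OF measurable_snd pol] by (simp add: split_beta')
  have "(\<lambda>y. ((), y)) \<in> (trajM SM n :: ('s, 'k) traj measure) \<rightarrow>\<^sub>M (count_space UNIV :: unit measure) \<Otimes>\<^sub>M trajM SM n"
    by (intro measurable_Pair measurable_const measurable_ident) auto
  from measurable_compose[OF this traj_kernel_meas[of "\<lambda>x s. pol s", OF p' P]]
  show ?thesis by (simp add: split_beta')
qed

lemma gauss_as_bind:
  fixes m :: "real^'k::finite"
  assumes s: "\<forall>k. \<sigma> $ k > 0"
  shows "gauss_pol m \<sigma> = gauss_pol 0 1 \<bind> (\<lambda>e. return borel (m + \<sigma> * e))"
  unfolding gauss_pol_affine[OF s, of m]
  by (rule bind_return_distr'[symmetric]) (auto simp: prob_space.not_empty[OF prob_space_gauss_std])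

lemma mixture:
  fixes m :: "'s \<Rightarrow> real^'k::finite"
  assumes m: "m \<in> SM \<rightarrow>\<^sub>M borel" and s: "\<forall>k. \<sigma> $ k > 0"
    and P: "(\<lambda>(s, a). P s a) \<in> SM \<Otimes>\<^sub>M borel \<rightarrow>\<^sub>M prob_algebra SM"
    and p0: "prob_space p0" "sets p0 = sets SM"
  shows "traj_measure SM p0 (\<lambda>i s. gauss_pol (m s) \<sigma>) P n
     = Emix n \<bind> (\<lambda>\<epsilon>. traj_measure SM p0 (\<lambda>i s. return borel (m s + \<sigma> * \<epsilon> i)) P n)"
proof (induction n)
  case 0
  have D: "(\<lambda>\<epsilon>. traj_measure SM p0 (\<lambda>i s. return borel (m s + \<sigma> * \<epsilon> i)) P 0) \<in> EPS \<rightarrow>\<^sub>M subprob_algebra (trajM SM 0)"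
    by (rule measurable_prob_algebraD[OF traj_meas_param[OF _ P p0]])
       (rule det_kernel_meas[OF m], simp add: EPS_def)
  show ?case
    using bind_return[OF D, of "\<lambda>_. 0"] by simp
next
  case (Suc n)
  define Z where "Z = gauss_pol (0::real^'k) 1"
  define D where "D = (\<lambda>\<epsilon> n. traj_measure SM p0 (\<lambda>i s. return borel (m s + \<sigma> * \<epsilon> i)) P n)"
  define G where "G = (\<lambda>n. traj_measure SM p0 (\<lambda>i s. gauss_pol (m s) \<sigma>) P n)"
  define Kg where "Kg = (\<lambda>(s, a). gauss_pol (m (s n)) \<sigma> \<bind> (\<lambda>a'. P (s n) a' \<bind> (\<lambda>s'.
       return (trajM SM (Suc n)) (s(Suc n := s'), a(n := a')))))"
  define Kd where "Kd = (\<lambda>e (s, a). return borel (m (s n) + \<sigma> * e) \<bind> (\<lambda>a'. P (s n) a' \<bind> (\<lambda>s'.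
       return (trajM SM (Suc n)) (s(Suc n := s'), a(n := a')))))"
  have ZP: "prob_space Z" unfolding Z_def by (rule prob_space_gauss_std)
  have Dn: "(\<lambda>\<epsilon>. D \<epsilon> n) \<in> EPS \<rightarrow>\<^sub>M prob_algebra (trajM SM n)" for n
    unfolding D_def
    by (rule traj_meas_param[OF _ P p0]) (rule det_kernel_meas[OF m], simp add: EPS_def)
  have Esets: "sets (Emix n :: (nat \<Rightarrow> real^'k) measure) = sets (EPS :: (nat \<Rightarrow> real^'k) measure)"
    using Emix_in[of n, unfolded space_prob_algebra] by blast
  have DnE: "(\<lambda>\<epsilon>. D \<epsilon> n) \<in> Emix n \<rightarrow>\<^sub>M subprob_algebra (trajM SM n)"
    unfolding measurable_cong_sets[OF Esets refl] by (rule measurable_prob_algebraD[OF Dn[of n]])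
  have StE: "(\<lambda>\<epsilon>::nat \<Rightarrow> real^'k. gauss_pol (0::real^'k) 1 \<bind> (\<lambda>e. return (EPS :: (nat \<Rightarrow> real^'k) measure) (\<epsilon>(n := e))))
      \<in> (Emix n :: (nat \<Rightarrow> real^'k) measure) \<rightarrow>\<^sub>M subprob_algebra (EPS :: (nat \<Rightarrow> real^'k) measure)"
    unfolding measurable_cong_sets[OF Esets refl] by (rule measurable_prob_algebraD[OF Emix_step_meas[of n]])
  have Dn_in: "D \<epsilon> n \<in> space (prob_algebra (trajM SM n))" for \<epsilon> n
    using measurable_space[OF Dn, of \<epsilon> n] by simp
  have Dn_ps: "prob_space (D \<epsilon> n)" and Dn_sets: "sets (D \<epsilon> n) = sets (trajM SM n)" for \<epsilon> n
    using Dn_in[of \<epsilon> n] by (auto simp: space_prob_algebra)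
  have gk: "(\<lambda>s. gauss_pol (m s) \<sigma>) \<in> SM \<rightarrow>\<^sub>M prob_algebra borel"
  proof -
    have "(\<lambda>y. ((), y)) \<in> SM \<rightarrow>\<^sub>M (count_space UNIV :: unit measure) \<Otimes>\<^sub>M SM"
      by (intro measurable_Pair measurable_const measurable_ident) auto
    from measurable_compose[OF this gauss_kernel_meas[OF m s]] show ?thesis by simp
  qed
  have Kg_meas: "Kg \<in> trajM SM n \<rightarrow>\<^sub>M prob_algebra (trajM SM (Suc n))"
    unfolding Kg_def by (rule unit_lift_kernel[OF gk P])
  have Kd_meas: "(\<lambda>(e, x). Kd e x) \<in> (borel :: (real^'k) measure) \<Otimes>\<^sub>M trajM SM n \<rightarrow>\<^sub>M prob_algebra (trajM SM (Suc n))"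
  proof -
    have "(\<lambda>(x, y). return borel (m y + \<sigma> * id x)) \<in> (borel :: (real^'k) measure) \<Otimes>\<^sub>M SM \<rightarrow>\<^sub>M prob_algebra borel"
      by (rule det_kernel_meas[OF m]) simp
    from traj_kernel_meas[OF this[simplified] P, of n]
    show ?thesis by (simp add: Kd_def split_beta')
  qed
  have F_meas: "(\<lambda>a'. P (s n) a' \<bind> (\<lambda>s'. return (trajM SM (Suc n)) (s(Suc n := s'), a(n := a'))))
      \<in> borel \<rightarrow>\<^sub>M prob_algebra (trajM SM (Suc n))" if x: "(s, a) \<in> space (trajM SM n :: ('s, 'k) traj measure)" for s a
  proof (rule measurable_bind_prob_space2)
    have sn: "s n \<in> space SM"
      using measurable_space[OF traj_state_meas[of n n SM] x] by simp
    have "(\<lambda>a'. (s n, a')) \<in> (borel :: (real^'k) measure) \<rightarrow>\<^sub>M SM \<Otimes>\<^sub>M borel"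
      using sn by (intro measurable_Pair measurable_const measurable_ident) auto
    from measurable_compose[OF this P]
    show "(\<lambda>a'. P (s n) a') \<in> (borel :: (real^'k) measure) \<rightarrow>\<^sub>M prob_algebra SM" by simp
    have "(\<lambda>z. ((fst (s, a))(Suc n := snd z), (snd (s, a))(n := fst z))) \<in> (borel :: (real^'k) measure) \<Otimes>\<^sub>M SM \<rightarrow>\<^sub>M trajM SM (Suc n)"
      by (rule traj_upd_meas[OF measurable_const[OF x]]) auto
    from measurable_compose[OF this measurable_return_prob_space]
    show "(\<lambda>(a', s'). return (trajM SM (Suc n)) (s(Suc n := s'), a(n := a'))) \<in> (borel :: (real^'k) measure) \<Otimes>\<^sub>M SM \<rightarrow>\<^sub>M prob_algebra (trajM SM (Suc n))"
      by (simp add: split_beta')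
  qed
  have Kg_eq: "Kg x = Z \<bind> (\<lambda>e. Kd e x)" if x: "x \<in> space (trajM SM n)" for x
  proof -
    obtain s a where xa: "x = (s, a)" by (cases x)
    have R: "(\<lambda>e. return borel (m (s n) + \<sigma> * e)) \<in> Z \<rightarrow>\<^sub>M subprob_algebra borel"
      unfolding Z_def by (simp cong: measurable_cong_sets)
    show ?thesis
      unfolding xa Kg_def Kd_def split gauss_as_bind[OF s, of "m (s n)"] Z_def[symmetric]
      by (rule bind_assoc[OF R measurable_prob_algebraD[OF F_meas]]) (use x xa in simp)
  qed
  have inner: "D \<epsilon> n \<bind> Kg = Z \<bind> (\<lambda>e. D (\<epsilon>(n := e)) (Suc n))" for \<epsilon>
  proof -
    interpret pp: pair_prob_space Z "D \<epsilon> n"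
      by (simp add: pair_prob_space_def pair_sigma_finite_def ZP Dn_ps prob_space_imp_sigma_finite)
    have C: "(\<lambda>(e, x). Kd e x) \<in> Z \<Otimes>\<^sub>M D \<epsilon> n \<rightarrow>\<^sub>M subprob_algebra (trajM SM (Suc n))"
      using measurable_prob_algebraD[OF Kd_meas]
      by (simp add: Z_def Dn_sets cong: measurable_cong_sets sets_pair_measure_cong)
    have "D \<epsilon> n \<bind> Kg = D \<epsilon> n \<bind> (\<lambda>x. Z \<bind> (\<lambda>e. Kd e x))"
      by (intro bind_cong refl Kg_eq) (simp add: sets_eq_imp_space_eq[OF Dn_sets])
    also have "\<dots> = Z \<bind> (\<lambda>e. D \<epsilon> n \<bind> (\<lambda>x. Kd e x))"
      by (rule pp.bind_rotate[OF C, symmetric])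
    also have "\<dots> = Z \<bind> (\<lambda>e. D (\<epsilon>(n := e)) (Suc n))"
    proof (intro bind_cong refl)
      fix e
      have "D (\<epsilon>(n := e)) n = D \<epsilon> n"
        unfolding D_def by (rule traj_local) auto
      then show "D \<epsilon> n \<bind> Kd e = D (\<epsilon>(n := e)) (Suc n)"
        by (simp add: D_def Kd_def)
    qed
    finally show ?thesis .
  qed
  have "G (Suc n) = G n \<bind> Kg"
    by (simp add: G_def Kg_def)
  also have "\<dots> = (Emix n \<bind> (\<lambda>\<epsilon>. D \<epsilon> n)) \<bind> Kg"
    using Suc.IH by (simp add: G_def D_def)
  also have "\<dots> = Emix n \<bind> (\<lambda>\<epsilon>. D \<epsilon> n \<bind> Kg)"
    by (rule bind_assoc[OF DnE measurable_prob_algebraD[OF Kg_meas]])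
  also have "\<dots> = Emix n \<bind> (\<lambda>\<epsilon>. Z \<bind> (\<lambda>e. D (\<epsilon>(n := e)) (Suc n)))"
    by (simp add: inner)
  also have "\<dots> = Emix n \<bind> (\<lambda>\<epsilon>. (Z \<bind> (\<lambda>e. return EPS (\<epsilon>(n := e)))) \<bind> (\<lambda>\<epsilon>'. D \<epsilon>' (Suc n)))"
  proof (intro bind_cong refl)
    fix \<epsilon> :: "nat \<Rightarrow> real^'k"
    have "(\<lambda>e. (\<epsilon>, e)) \<in> (borel :: (real^'k) measure) \<rightarrow>\<^sub>M EPS \<Otimes>\<^sub>M borel"
      by (intro measurable_Pair measurable_const measurable_ident) auto
    from measurable_compose[OF measurable_compose[OF this upd_meas] return_measurable]
    have R: "(\<lambda>e. return EPS (\<epsilon>(n := e))) \<in> Z \<rightarrow>\<^sub>M subprob_algebra EPS"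
      unfolding Z_def by (simp cong: measurable_cong_sets)
    have "(Z \<bind> (\<lambda>e. return EPS (\<epsilon>(n := e)))) \<bind> (\<lambda>\<epsilon>'. D \<epsilon>' (Suc n))
        = Z \<bind> (\<lambda>e. return EPS (\<epsilon>(n := e)) \<bind> (\<lambda>\<epsilon>'. D \<epsilon>' (Suc n)))"
      by (rule bind_assoc[OF R measurable_prob_algebraD[OF Dn]])
    also have "\<dots> = Z \<bind> (\<lambda>e. D (\<epsilon>(n := e)) (Suc n))"
      by (intro bind_cong refl bind_return[OF measurable_prob_algebraD[OF Dn]]) simp
    finally show "Z \<bind> (\<lambda>e. D (\<epsilon>(n := e)) (Suc n)) = (Z \<bind> (\<lambda>e. return EPS (\<epsilon>(n := e)))) \<bind> (\<lambda>\<epsilon>'. D \<epsilon>' (Suc n))"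
      by simp
  qed
  also have "\<dots> = Emix (Suc n) \<bind> (\<lambda>\<epsilon>. D \<epsilon> (Suc n))"
    unfolding Emix.simps Z_def
    by (rule bind_assoc[OF StE measurable_prob_algebraD[OF Dn], symmetric])
  finally show ?case by (simp add: G_def D_def)
qed




lemma ln_normal_density:
  assumes "s > 0"
  shows "ln (normal_density m s x) = - ln (sqrt (2 * pi)) - ln s - (x - m)\<^sup>2 / (2 * s\<^sup>2)"
  using assms by (simp add: normal_density_def ln_mult ln_div real_sqrt_mult)

lemma log_pi_diff:
  fixes mu' :: "real^'p::finite \<Rightarrow> 's \<Rightarrow> real^'k::finite"
  assumes diff: "(\<lambda>p. mu' p s) differentiable (at \<theta>p)" and sig: "\<forall>k. \<sigma> $ k > 0"
  shows "(\<lambda>th. log_pi mu' th s a) differentiable (at (\<theta>p, b, \<sigma>))"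
proof -
  define f where "f = (\<lambda>th::(real^'p) \<times> (real^'k) \<times> (real^'k). \<Sum>k\<in>UNIV.
      - ln (sqrt (2 * pi)) - ln ((snd (snd th)) $ k) - (a $ k - (mu' (fst th) s + fst (snd th)) $ k)\<^sup>2 / (2 * ((snd (snd th)) $ k)\<^sup>2))"
  define U where "U = {th::(real^'p) \<times> (real^'k) \<times> (real^'k). \<forall>k. (snd (snd th)) $ k > 0}"
  have "open U"
  proof -
    have "U = (\<Inter>k\<in>UNIV. (\<lambda>th::(real^'p) \<times> (real^'k) \<times> (real^'k). (snd (snd th)) $ k) -` {0<..})"
      by (auto simp: U_def)
    also have "open \<dots>"
      by (intro open_INT finite_UNIV ballI open_vimage continuous_intros) auto
    finally show ?thesis .
  qed
  have inU: "(\<theta>p, b, \<sigma>) \<in> U" using sig by (simp add: U_def)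
  have eq: "f th = log_pi mu' th s a" if "th \<in> U" for th
    using that by (cases th) (auto simp: U_def f_def log_pi_def ln_normal_density intro!: sum.cong)
  have d1: "(\<lambda>th::(real^'p) \<times> (real^'k) \<times> (real^'k). (snd (snd th)) $ k) differentiable (at (\<theta>p, b, \<sigma>))" for k
    by (intro bounded_linear_imp_differentiable bounded_linear_compose[OF bounded_linear_vec_nth]
        bounded_linear_compose[OF bounded_linear_snd] bounded_linear_snd)
  have dmu: "(\<lambda>th::(real^'p) \<times> (real^'k) \<times> (real^'k). mu' (fst th) s) differentiable (at (\<theta>p, b, \<sigma>))"
    using differentiable_compose[of "\<lambda>p. mu' p s" fst "(\<theta>p, b, \<sigma>)" UNIV] diff
    by (simp add: bounded_linear_imp_differentiable bounded_linear_fst)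
  have dfs: "(\<lambda>th::(real^'p) \<times> (real^'k) \<times> (real^'k). fst (snd th)) differentiable (at (\<theta>p, b, \<sigma>))"
    by (intro bounded_linear_imp_differentiable bounded_linear_compose[OF bounded_linear_fst] bounded_linear_snd)
  have d2: "(\<lambda>th::(real^'p) \<times> (real^'k) \<times> (real^'k). (mu' (fst th) s + fst (snd th)) $ k) differentiable (at (\<theta>p, b, \<sigma>))" for k
    using differentiable_compose[of "\<lambda>v. v $ k" "\<lambda>th::(real^'p) \<times> (real^'k) \<times> (real^'k). mu' (fst th) s + fst (snd th)" "(\<theta>p, b, \<sigma>)" UNIV]
      differentiable_add[OF dmu dfs]
    by (simp add: bounded_linear_imp_differentiable bounded_linear_vec_nth)
  have lnd: "ln differentiable (at x)" if "x > 0" for x :: real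
    using DERIV_ln[OF that] unfolding has_field_derivative_def differentiable_def by blast
  have d3: "(\<lambda>th::(real^'p) \<times> (real^'k) \<times> (real^'k). ln ((snd (snd th)) $ k)) differentiable (at (\<theta>p, b, \<sigma>))" for k
    using differentiable_compose[OF lnd d1, of k] sig by simp
  have "f differentiable (at (\<theta>p, b, \<sigma>))"
    unfolding f_def
    using sig d1 d2 d3
    by (intro differentiable_sum ballI finite_UNIV differentiable_diff differentiable_const
        differentiable_divide differentiable_power differentiable_mult) (auto simp: less_imp_neq[symmetric])
  then obtain F where F: "(f has_derivative F) (at (\<theta>p, b, \<sigma>))"
    unfolding differentiable_def by blast
  have "((\<lambda>th. log_pi mu' th s a) has_derivative F) (at (\<theta>p, b, \<sigma>))"
    by (rule has_derivative_transform_within_open[OF F \<open>open U\<close> inU eq])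
  then show ?thesis unfolding differentiable_def by blast
qed

lemma grad_b:
  fixes mu' :: "real^'p::finite \<Rightarrow> 's \<Rightarrow> real^'k::finite"
  assumes diff: "(\<lambda>p. mu' p s) differentiable (at \<theta>p)" and sig: "\<forall>k. \<sigma> $ k > 0"
  shows "grad (\<lambda>th. log_pi mu' th s a) (\<theta>p, b, \<sigma>) \<bullet> (0, axis k 1, 0)
     = (a $ k - (mu' \<theta>p s + b) $ k) / (\<sigma> $ k)\<^sup>2"
proof -
  define f where "f = (\<lambda>th. log_pi mu' th s a)"
  define x0 where "x0 = (\<theta>p, b, \<sigma>)"
  define j where "j = ((0::real^'p), axis k (1::real), (0::real^'k))"
  obtain F where F: "(f has_derivative F) (at x0)"
    using log_pi_diff[of mu' s \<theta>p \<sigma> a b, OF diff sig] unfolding differentiable_def f_def x0_def by blast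
  have lin: "linear F" using F by (simp add: has_derivative_linear)
  define D0 where "D0 = (\<Sum>u\<in>Basis. F u *\<^sub>R u)"
  have FD: "F h = h \<bullet> D0" for h
  proof -
    have "F h = F h \<bullet> 1" by simp
    also have "\<dots> = (\<Sum>i\<in>Basis. (h \<bullet> i) * (F i \<bullet> 1))"
      by (rule Linear_Algebra.linear_componentwise[OF lin])
    also have "\<dots> = h \<bullet> D0"
      by (simp add: D0_def inner_sum_right mult.commute)
    finally show ?thesis .
  qed
  have Feq: "F = (\<lambda>h. h \<bullet> D0)" using FD by auto
  have G: "GDERIV f x0 :> D0"
    unfolding gderiv_def using F Feq by simp
  have gr: "grad f x0 = D0"
    unfolding grad_def
  proof (rule the_equality)
    show "GDERIV f x0 :> D0" by (rule G)
    fix D assume "GDERIV f x0 :> D"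
    then have "(\<lambda>h. h \<bullet> D) = (\<lambda>h. h \<bullet> D0)"
      using G unfolding gderiv_def by (rule has_derivative_unique)
    then have "(D - D0) \<bullet> D = (D - D0) \<bullet> D0" by metis
    then have "(D - D0) \<bullet> (D - D0) = 0" by (simp add: inner_diff_right)
    then show "D = D0" by simp
  qed
  have line: "((\<lambda>t::real. x0 + t *\<^sub>R j) has_derivative (\<lambda>t. t *\<^sub>R j)) (at 0)"
    by (auto intro!: derivative_eq_intros)
  have F0: "(f has_derivative F) (at ((\<lambda>t::real. x0 + t *\<^sub>R j) 0))" using F by simp
  have "((\<lambda>t. f (x0 + t *\<^sub>R j)) has_derivative (\<lambda>t. F (t *\<^sub>R j))) (at 0)"
    using diff_chain_at[OF line F0] by (simp add: o_def)
  moreover have "(\<lambda>t. F (t *\<^sub>R j)) = (\<lambda>t. (F j) * t)"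
    using lin by (auto simp: linear_scale)
  ultimately have d1: "((\<lambda>t. f (x0 + t *\<^sub>R j)) has_real_derivative F j) (at 0)"
    by (simp add: has_field_derivative_def)
  define \<mu> where "\<mu> = mu' \<theta>p s + b"
  have phi: "f (x0 + t *\<^sub>R j) = (\<Sum>i\<in>UNIV. - ln (sqrt (2 * pi)) - ln (\<sigma> $ i)
      - (a $ i - \<mu> $ i - t * (if i = k then 1 else 0))\<^sup>2 / (2 * (\<sigma> $ i)\<^sup>2))" for t
    using sig
    by (auto simp: f_def x0_def j_def log_pi_def ln_normal_density \<mu>_def axis_def algebra_simps
        intro!: sum.cong)
  have d2: "((\<lambda>t. \<Sum>i\<in>UNIV. - ln (sqrt (2 * pi)) - ln (\<sigma> $ i)
      - (a $ i - \<mu> $ i - t * (if i = k then 1 else 0))\<^sup>2 / (2 * (\<sigma> $ i)\<^sup>2))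
      has_real_derivative (\<Sum>i\<in>UNIV. (if i = k then (a $ k - \<mu> $ k) / (\<sigma> $ k)\<^sup>2 else 0))) (at 0)"
  proof (rule DERIV_sum)
    fix i :: 'k
    show "((\<lambda>t. - ln (sqrt (2 * pi)) - ln (\<sigma> $ i)
      - (a $ i - \<mu> $ i - t * (if i = k then 1 else 0))\<^sup>2 / (2 * (\<sigma> $ i)\<^sup>2))
      has_real_derivative (if i = k then (a $ k - \<mu> $ k) / (\<sigma> $ k)\<^sup>2 else 0)) (at 0)"
      using sig[rule_format, of i]
      by (cases "i = k") (auto intro!: derivative_eq_intros simp: power2_eq_square field_simps)
  qed
  have "F j = (\<Sum>i\<in>UNIV. (if i = k then (a $ k - \<mu> $ k) / (\<sigma> $ k)\<^sup>2 else 0))"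
    using DERIV_unique[OF d1 d2[folded phi]] by simp
  also have "\<dots> = (a $ k - \<mu> $ k) / (\<sigma> $ k)\<^sup>2" by simp
  finally have "F j = (a $ k - \<mu> $ k) / (\<sigma> $ k)\<^sup>2" .
  then show ?thesis
    using FD[of j] gr by (simp add: f_def x0_def j_def \<mu>_def inner_commute)
qed




lemma F_meas:
  fixes P :: "'s \<Rightarrow> real^'k::finite \<Rightarrow> 's measure"
  assumes P: "(\<lambda>(s, a). P s a) \<in> SM \<Otimes>\<^sub>M borel \<rightarrow>\<^sub>M prob_algebra SM"
    and x: "(s, a) \<in> space (trajM SM n :: ('s, 'k) traj measure)"
  shows "(\<lambda>a'. P (s n) a' \<bind> (\<lambda>s'. return (trajM SM (Suc n)) (s(Suc n := s'), a(n := a'))))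
      \<in> borel \<rightarrow>\<^sub>M prob_algebra (trajM SM (Suc n))"
proof (rule measurable_bind_prob_space2)
  have sn: "s n \<in> space SM"
    using measurable_space[OF traj_state_meas[of n n SM] x] by simp
  have "(\<lambda>a'. (s n, a')) \<in> (borel :: (real^'k) measure) \<rightarrow>\<^sub>M SM \<Otimes>\<^sub>M borel"
    using sn by (intro measurable_Pair measurable_const measurable_ident) auto
  from measurable_compose[OF this P]
  show "(\<lambda>a'. P (s n) a') \<in> (borel :: (real^'k) measure) \<rightarrow>\<^sub>M prob_algebra SM" by simp
  have "(\<lambda>z. ((fst (s, a))(Suc n := snd z), (snd (s, a))(n := fst z))) \<in> (borel :: (real^'k) measure) \<Otimes>\<^sub>M SM \<rightarrow>\<^sub>M trajM SM (Suc n)"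
    by (rule traj_upd_meas[OF measurable_const[OF x]]) auto
  from measurable_compose[OF this measurable_return_prob_space]
  show "(\<lambda>(a', s'). return (trajM SM (Suc n)) (s(Suc n := s'), a(n := a'))) \<in> (borel :: (real^'k) measure) \<Otimes>\<^sub>M SM \<rightarrow>\<^sub>M prob_algebra (trajM SM (Suc n))"
    by (simp add: split_beta')
qed

lemma det_AE:
  fixes m :: "'s \<Rightarrow> real^'k::finite"
  assumes m: "m \<in> SM \<rightarrow>\<^sub>M borel"
    and P: "(\<lambda>(s, a). P s a) \<in> SM \<Otimes>\<^sub>M borel \<rightarrow>\<^sub>M prob_algebra SM"
    and p0: "prob_space p0" "sets p0 = sets SM"
  shows "AE \<tau> in traj_measure SM p0 (\<lambda>i s. return borel (m s + \<sigma> * \<epsilon> i)) P n.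
           \<forall>i<n. snd \<tau> i = m (fst \<tau> i) + \<sigma> * \<epsilon> i"
proof (induction n)
  case 0
  show ?case by simp
next
  case (Suc n)
  define D where "D = (\<lambda>n. traj_measure SM p0 (\<lambda>i s. return borel (m s + \<sigma> * \<epsilon> i)) P n)"
  define Q where "Q = (\<lambda>n (\<tau> :: ('s, 'k) traj). \<forall>i<n. snd \<tau> i = m (fst \<tau> i) + \<sigma> * \<epsilon> i)"
  define Kd where "Kd = (\<lambda>(s, a). return borel (m (s n) + \<sigma> * \<epsilon> n) \<bind> (\<lambda>a'. P (s n) a' \<bind> (\<lambda>s'.
       return (trajM SM (Suc n)) (s(Suc n := s'), a(n := a')))))"
  have pol: "(\<lambda>s. return borel (m s + \<sigma> * \<epsilon> n)) \<in> SM \<rightarrow>\<^sub>M prob_algebra borel"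
    using m by measurable
  have Kd_meas: "Kd \<in> trajM SM n \<rightarrow>\<^sub>M subprob_algebra (trajM SM (Suc n))"
    unfolding Kd_def by (rule measurable_prob_algebraD[OF unit_lift_kernel[OF pol P]])
  have Qeq: "Q (Suc n) = (\<lambda>\<tau>. \<forall>i\<in>{..<Suc n}. snd \<tau> i = m (fst \<tau> i) + \<sigma> * \<epsilon> i)"
    by (auto simp: Q_def fun_eq_iff)
  have predQ: "Measurable.pred (trajM SM (Suc n)) (Q (Suc n))"
    unfolding Qeq
  proof (rule pred_intros_finite(3))
    fix i assume "i \<in> {..<Suc n}"
    then have i: "i < Suc n" by simp
    have f1: "(\<lambda>\<tau>. snd \<tau> i) \<in> (trajM SM (Suc n) :: ('s, 'k) traj measure) \<rightarrow>\<^sub>M borel"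
      using traj_act_meas[OF i] .
    have f2: "(\<lambda>\<tau>. m (fst \<tau> i) + \<sigma> * \<epsilon> i) \<in> (trajM SM (Suc n) :: ('s, 'k) traj measure) \<rightarrow>\<^sub>M borel"
      using measurable_compose[OF traj_state_meas[of i "Suc n" SM] m] i
      by (intro borel_measurable_add) auto
    show "Measurable.pred (trajM SM (Suc n)) (\<lambda>\<tau>. snd \<tau> i = m (fst \<tau> i) + \<sigma> * \<epsilon> i)"
      unfolding pred_def using measurable_equality_set[OF f1 f2] .
  qed simp
  have DS: "D (Suc n) = D n \<bind> Kd" by (simp add: D_def Kd_def)
  have Dn_in: "D n \<in> space (prob_algebra (trajM SM n))"
  proof -
    have "(\<lambda>x::unit. traj_measure SM p0 (\<lambda>i s. return borel (m s + \<sigma> * \<epsilon> i)) P n) \<in> (count_space UNIV) \<rightarrow>\<^sub>M prob_algebra (trajM SM n)"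
      by (rule traj_meas_param[OF _ P p0]) (rule det_kernel_meas[OF m], simp)
    from measurable_space[OF this, of "()"] show ?thesis by (simp add: D_def)
  qed
  have Dsets: "sets (D n) = sets (trajM SM n)"
    using Dn_in by (simp add: space_prob_algebra)
  have Kd_meas': "Kd \<in> D n \<rightarrow>\<^sub>M subprob_algebra (trajM SM (Suc n))"
    unfolding measurable_cong_sets[OF Dsets refl] by (rule Kd_meas)
  have "AE x in D n. AE y in Kd x. Q (Suc n) y"
  proof -
    have "AE x in D n. Q n x"
      unfolding D_def Q_def by (rule Suc.IH)
    moreover have "AE x in D n. x \<in> space (trajM SM n)"
      by (rule AE_I2) (use sets_eq_imp_space_eq[OF Dsets] in simp)
    ultimately show ?thesis
    proof eventually_elim
      case (elim x)
      then have Qx: "Q n x" and x: "x \<in> space (trajM SM n)" by auto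
      obtain s a where xa: "x = (s, a)" by (cases x)
      define a0 where "a0 = m (s n) + \<sigma> * \<epsilon> n"
      have Fm: "(\<lambda>a'. P (s n) a' \<bind> (\<lambda>s'. return (trajM SM (Suc n)) (s(Suc n := s'), a(n := a'))))
          \<in> borel \<rightarrow>\<^sub>M subprob_algebra (trajM SM (Suc n))"
        using measurable_prob_algebraD[OF F_meas[OF P x[unfolded xa]]] .
      have "Kd x = P (s n) a0 \<bind> (\<lambda>s'. return (trajM SM (Suc n)) (s(Suc n := s'), a(n := a0)))"
        unfolding Kd_def xa a0_def by (simp add: bind_return[OF Fm])
      moreover have "AE y in P (s n) a0 \<bind> (\<lambda>s'. return (trajM SM (Suc n)) (s(Suc n := s'), a(n := a0))). Q (Suc n) y"
      proof -
        have U: "(\<lambda>s'. ((fst (s, a))(Suc n := s'), (snd (s, a))(n := a0))) \<in> SM \<rightarrow>\<^sub>M (trajM SM (Suc n) :: ('s, 'k) traj measure)"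
          by (rule traj_upd_meas[OF measurable_const[OF x[unfolded xa]]]) auto
        have R: "(\<lambda>s'. return (trajM SM (Suc n)) (s(Suc n := s'), a(n := a0))) \<in> SM \<rightarrow>\<^sub>M subprob_algebra (trajM SM (Suc n))"
          using measurable_compose[OF U return_measurable] by simp
        have sn: "s n \<in> space SM"
          using measurable_space[OF traj_state_meas[of n n SM] x[unfolded xa]] by simp
        have "P (s n) a0 \<in> space (prob_algebra SM)"
          using measurable_space[OF P, of "(s n, a0)"] sn by (simp add: space_pair_measure)
        then have Ps: "sets (P (s n) a0) = sets SM"
          by (simp add: space_prob_algebra)
        then have sp: "space (P (s n) a0) = space SM"
          by (rule sets_eq_imp_space_eq)
        have R': "(\<lambda>s'. return (trajM SM (Suc n)) (s(Suc n := s'), a(n := a0))) \<in> P (s n) a0 \<rightarrow>\<^sub>M subprob_algebra (trajM SM (Suc n))"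
          unfolding measurable_cong_sets[OF Ps refl] by (rule R)
        have "AE s' in P (s n) a0. AE y in return (trajM SM (Suc n)) (s(Suc n := s'), a(n := a0)). Q (Suc n) y"
        proof (rule AE_I2)
          fix s' assume s': "s' \<in> space (P (s n) a0)"
          have inT: "(s(Suc n := s'), a(n := a0)) \<in> space (trajM SM (Suc n))"
            using measurable_space[OF U, of s'] s' sp by simp
          have "Q (Suc n) (s(Suc n := s'), a(n := a0))"
            using Qx unfolding Q_def xa a0_def by auto
          then show "AE y in return (trajM SM (Suc n)) (s(Suc n := s'), a(n := a0)). Q (Suc n) y"
            using AE_return[OF inT predQ] by simp
        qed
        then show ?thesis
          by (subst AE_bind[OF R' predQ])
      qed
      ultimately show "AE y in Kd x. Q (Suc n) y" by (simp only:)
    qed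
  qed
  then have "AE y in D (Suc n). Q (Suc n) y"
    unfolding DS by (subst AE_bind[OF Kd_meas' predQ])
  then show ?case unfolding D_def Q_def .
qed




lemma abs_le_1_sq: "\<bar>t::real\<bar> \<le> 1 + t\<^sup>2"
proof (cases "\<bar>t\<bar> \<le> 1")
  case True then show ?thesis by (simp add: add_increasing2)
next
  case False
  then have "\<bar>t\<bar> * 1 \<le> \<bar>t\<bar> * \<bar>t\<bar>" by (intro mult_left_mono) auto
  also have "\<dots> = t\<^sup>2" by (simp add: power2_eq_square)
  finally show ?thesis by simp
qed

lemma ext_var_le:
  assumes M: "prob_space M" and R[measurable]: "R \<in> borel_measurable M"
  shows "ext_variance M R \<le> (\<integral>\<^sup>+x. ennreal ((R x - c)\<^sup>2) \<partial>M)"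
proof (cases "(\<integral>\<^sup>+x. ennreal ((R x - c)\<^sup>2) \<partial>M) = \<infinity>")
  case True then show ?thesis by simp
next
  case False
  interpret prob_space M by (rule M)
  have sq: "integrable M (\<lambda>x. (R x - c)\<^sup>2)"
    by (rule integrableI_nonneg) (use False in \<open>auto simp: top.not_eq_extremum\<close>)
  have intR: "integrable M R"
  proof (rule Bochner_Integration.integrable_bound)
    show "integrable M (\<lambda>x. \<bar>c\<bar> + 1 + (R x - c)\<^sup>2)"
      using sq by (intro Bochner_Integration.integrable_add) auto
    show "AE x in M. norm (R x) \<le> norm (\<bar>c\<bar> + 1 + (R x - c)\<^sup>2)"
    proof (rule AE_I2)
      fix x
      have "\<bar>R x\<bar> \<le> \<bar>c\<bar> + \<bar>R x - c\<bar>" by linarith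
      also have "\<dots> \<le> \<bar>c\<bar> + (1 + (R x - c)\<^sup>2)" using abs_le_1_sq[of "R x - c"] by linarith
      finally show "norm (R x) \<le> norm (\<bar>c\<bar> + 1 + (R x - c)\<^sup>2)" by simp
    qed
  qed simp
  define \<mu> where "\<mu> = (\<integral>y. R y \<partial>M)"
  have eqf: "(R x - \<mu>)\<^sup>2 = (R x - c)\<^sup>2 + (2 * (c - \<mu>)) * (R x - c) + (c - \<mu>)\<^sup>2" for x
    by (simp add: power2_eq_square algebra_simps)
  have int2: "integrable M (\<lambda>x. (R x - c)\<^sup>2 + (2 * (c - \<mu>)) * (R x - c) + (c - \<mu>)\<^sup>2)"
    using sq intR by (intro Bochner_Integration.integrable_add Bochner_Integration.integrable_mult_right Bochner_Integration.integrable_diff) auto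
  have intmu: "integrable M (\<lambda>x. (R x - \<mu>)\<^sup>2)"
    using int2 by (simp only: eqf)
  have "(\<integral>x. (R x - \<mu>)\<^sup>2 \<partial>M) = (\<integral>x. (R x - c)\<^sup>2 + (2 * (c - \<mu>)) * (R x - c) + (c - \<mu>)\<^sup>2 \<partial>M)"
    by (simp only: eqf)
  also have "\<dots> = (\<integral>x. (R x - c)\<^sup>2 \<partial>M) + (2 * (c - \<mu>)) * (\<integral>x. R x - c \<partial>M) + (c - \<mu>)\<^sup>2"
    using sq intR by (simp add: Bochner_Integration.integral_add Bochner_Integration.integral_diff prob_space)
  also have "(\<integral>x. R x - c \<partial>M) = \<mu> - c"
    using intR by (simp add: Bochner_Integration.integral_diff prob_space \<mu>_def)
  finally have "(\<integral>x. (R x - \<mu>)\<^sup>2 \<partial>M) = (\<integral>x. (R x - c)\<^sup>2 \<partial>M) - (c - \<mu>)\<^sup>2"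
    by (simp add: power2_eq_square algebra_simps)
  then have le: "(\<integral>x. (R x - \<mu>)\<^sup>2 \<partial>M) \<le> (\<integral>x. (R x - c)\<^sup>2 \<partial>M)" by simp
  have "ext_variance M R = (\<integral>\<^sup>+x. ennreal ((R x - \<mu>)\<^sup>2) \<partial>M)"
    using intR by (simp add: ext_variance_def \<mu>_def)
  also have "\<dots> = ennreal (\<integral>x. (R x - \<mu>)\<^sup>2 \<partial>M)"
    using intmu by (intro nn_integral_eq_integral) auto
  also have "\<dots> \<le> ennreal (\<integral>x. (R x - c)\<^sup>2 \<partial>M)"
    using le by (rule ennreal_leI)
  also have "\<dots> = (\<integral>\<^sup>+x. ennreal ((R x - c)\<^sup>2) \<partial>M)"
    using sq by (intro nn_integral_eq_integral[symmetric]) auto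
  finally show ?thesis .
qed

lemma var_scale_bound:
  assumes M: "prob_space M" and R[measurable]: "R \<in> borel_measurable M"
    and c: "ennreal c0 \<le> ext_variance M R" "c0 \<ge> 0"
  shows "ennreal (a\<^sup>2 * c0) \<le> (\<integral>\<^sup>+x. ennreal ((R x * a - \<mu>)\<^sup>2) \<partial>M)"
proof (cases "a = 0")
  case True then show ?thesis by simp
next
  case False
  have "(\<integral>\<^sup>+x. ennreal ((R x * a - \<mu>)\<^sup>2) \<partial>M) = (\<integral>\<^sup>+x. ennreal (a\<^sup>2) * ennreal ((R x - \<mu> / a)\<^sup>2) \<partial>M)"
  proof (intro nn_integral_cong)
    fix x
    have "(R x * a - \<mu>)\<^sup>2 = a\<^sup>2 * (R x - \<mu> / a)\<^sup>2"
      using False by (simp add: power2_eq_square field_simps)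
    then show "ennreal ((R x * a - \<mu>)\<^sup>2) = ennreal (a\<^sup>2) * ennreal ((R x - \<mu> / a)\<^sup>2)"
      by (simp add: ennreal_mult)
  qed
  also have "\<dots> = ennreal (a\<^sup>2) * (\<integral>\<^sup>+x. ennreal ((R x - \<mu> / a)\<^sup>2) \<partial>M)"
    by (rule nn_integral_cmult) simp
  finally have eq: "(\<integral>\<^sup>+x. ennreal ((R x * a - \<mu>)\<^sup>2) \<partial>M) = ennreal (a\<^sup>2) * (\<integral>\<^sup>+x. ennreal ((R x - \<mu> / a)\<^sup>2) \<partial>M)" .
  have "ennreal (a\<^sup>2 * c0) = ennreal (a\<^sup>2) * ennreal c0"
    by (rule ennreal_mult) (use c(2) in auto)
  also have "\<dots> \<le> ennreal (a\<^sup>2) * ext_variance M R"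
    using c(1) by (rule mult_left_mono) simp
  also have "\<dots> \<le> ennreal (a\<^sup>2) * (\<integral>\<^sup>+x. ennreal ((R x - \<mu> / a)\<^sup>2) \<partial>M)"
    using ext_var_le[OF M R, of "\<mu> / a"] by (rule mult_left_mono) simp
  finally show ?thesis using eq by simp
qed

lemma eps_comp_meas[measurable]:
  "(\<lambda>\<epsilon>::nat \<Rightarrow> real^'k::finite. \<epsilon> i $ k) \<in> borel_measurable EPS"
proof -
  have "(\<lambda>\<epsilon>::nat \<Rightarrow> real^'k. \<epsilon> i) \<in> EPS \<rightarrow>\<^sub>M borel"
    unfolding EPS_def by (rule measurable_component_singleton) simp
  moreover have "(\<lambda>v::real^'k. v $ k) \<in> borel_measurable borel"
    by (intro borel_measurable_continuous_onI continuous_intros)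
  ultimately show ?thesis by (rule measurable_compose)
qed

lemma Emix_sq:
  fixes k :: "'k::finite"
  shows "(\<integral>\<^sup>+\<epsilon>. ennreal ((x + (\<Sum>i<n. \<epsilon> i $ k))\<^sup>2) \<partial>(Emix n :: (nat \<Rightarrow> real^'k) measure)) = ennreal (x\<^sup>2 + real n)"
proof (induction n)
  case 0
  show ?case
    apply (simp only: Emix.simps)
    apply (subst nn_integral_return)
    apply simp_all
    done
next
  case (Suc n)
  define f where "f = (\<lambda>n (\<epsilon>::nat \<Rightarrow> real^'k). ennreal ((x + (\<Sum>i<n. \<epsilon> i $ k))\<^sup>2))"
  have fm: "f n' \<in> borel_measurable EPS" for n'
    unfolding f_def by measurable
  have Esets: "sets (Emix n :: (nat \<Rightarrow> real^'k) measure) = sets (EPS :: (nat \<Rightarrow> real^'k) measure)"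
    using Emix_in[of n, unfolded space_prob_algebra] by blast
  have Eps: "prob_space (Emix n :: (nat \<Rightarrow> real^'k) measure)"
    using Emix_in[of n, unfolded space_prob_algebra] by blast
  have StE: "(\<lambda>\<epsilon>::nat \<Rightarrow> real^'k. gauss_pol (0::real^'k) 1 \<bind> (\<lambda>e. return (EPS :: (nat \<Rightarrow> real^'k) measure) (\<epsilon>(n := e))))
      \<in> (Emix n :: (nat \<Rightarrow> real^'k) measure) \<rightarrow>\<^sub>M subprob_algebra (EPS :: (nat \<Rightarrow> real^'k) measure)"
    unfolding measurable_cong_sets[OF Esets refl] by (rule measurable_prob_algebraD[OF Emix_step_meas[of n]])
  have inner: "(\<integral>\<^sup>+\<epsilon>'. f (Suc n) \<epsilon>' \<partial>(gauss_pol (0::real^'k) 1 \<bind> (\<lambda>e. return EPS (\<epsilon>(n := e)))))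
      = ennreal ((x + (\<Sum>i<n. \<epsilon> i $ k))\<^sup>2 + 1)" for \<epsilon> :: "nat \<Rightarrow> real^'k"
  proof -
    have "(\<lambda>e. (\<epsilon>, e)) \<in> (borel :: (real^'k) measure) \<rightarrow>\<^sub>M EPS \<Otimes>\<^sub>M borel"
      by (intro measurable_Pair measurable_const measurable_ident) auto
    from measurable_compose[OF measurable_compose[OF this upd_meas] return_measurable]
    have R: "(\<lambda>e. return EPS (\<epsilon>(n := e))) \<in> gauss_pol (0::real^'k) 1 \<rightarrow>\<^sub>M subprob_algebra EPS"
      by (simp cong: measurable_cong_sets)
    have "(\<integral>\<^sup>+\<epsilon>'. f (Suc n) \<epsilon>' \<partial>(gauss_pol (0::real^'k) 1 \<bind> (\<lambda>e. return EPS (\<epsilon>(n := e)))))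
        = (\<integral>\<^sup>+e. (\<integral>\<^sup>+\<epsilon>'. f (Suc n) \<epsilon>' \<partial>return EPS (\<epsilon>(n := e))) \<partial>gauss_pol (0::real^'k) 1)"
      by (rule nn_integral_bind[OF fm R])
    also have "\<dots> = (\<integral>\<^sup>+e. f (Suc n) (\<epsilon>(n := e)) \<partial>gauss_pol (0::real^'k) 1)"
      by (intro nn_integral_cong nn_integral_return) (auto intro: fm)
    also have "\<dots> = (\<integral>\<^sup>+e. ennreal (((x + (\<Sum>i<n. \<epsilon> i $ k)) + e $ k)\<^sup>2) \<partial>gauss_pol (0::real^'k) 1)"
      by (intro nn_integral_cong) (simp add: f_def add.assoc)
    also have "\<dots> = ennreal ((x + (\<Sum>i<n. \<epsilon> i $ k))\<^sup>2 + 1)"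
      by (rule gauss_std_sq)
    finally show ?thesis .
  qed
  have "(\<integral>\<^sup>+\<epsilon>. f (Suc n) \<epsilon> \<partial>Emix (Suc n)) = (\<integral>\<^sup>+\<epsilon>. (\<integral>\<^sup>+\<epsilon>'. f (Suc n) \<epsilon>' \<partial>(gauss_pol (0::real^'k) 1 \<bind> (\<lambda>e. return EPS (\<epsilon>(n := e))))) \<partial>Emix n)"
    by (simp only: Emix.simps) (rule nn_integral_bind[OF fm StE])
  also have "\<dots> = (\<integral>\<^sup>+\<epsilon>. f n \<epsilon> + 1 \<partial>Emix n)"
    by (intro nn_integral_cong, subst inner) (simp add: f_def)
  also have "\<dots> = (\<integral>\<^sup>+\<epsilon>. f n \<epsilon> \<partial>Emix n) + (\<integral>\<^sup>+\<epsilon>. 1 \<partial>(Emix n :: (nat \<Rightarrow> real^'k) measure))"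
  proof (rule nn_integral_add)
    show "f n \<in> borel_measurable (Emix n)"
      unfolding measurable_cong_sets[OF Esets refl] by (rule fm)
  qed simp
  also have "\<dots> = ennreal (x\<^sup>2 + real n) + 1"
    using Suc.IH prob_space.emeasure_space_1[OF Eps] by (simp add: f_def)
  also have "\<dots> = ennreal (x\<^sup>2 + real n + 1)"
    by (subst ennreal_plus) auto
  also have "\<dots> = ennreal (x\<^sup>2 + real (Suc n))"
    by (simp add: add.assoc)
  finally show ?case by (simp add: f_def)
qed




lemma ext_var_cong:
  assumes "\<And>x. x \<in> space M \<Longrightarrow> f x = g x"
  shows "ext_variance M f = ext_variance M g"
proof -
  have i: "integrable M f = integrable M g"
    by (rule Bochner_Integration.integrable_cong[OF refl]) (use assms in auto)
  have e: "(\<integral>y. f y \<partial>M) = (\<integral>y. g y \<partial>M)"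
    using assms by (intro Bochner_Integration.integral_cong) auto
  show ?thesis
    unfolding ext_variance_def i e
    using assms by (auto intro!: nn_integral_cong)
qed

lemma vnth_meas:
  fixes f :: "'a \<Rightarrow> real^'k::finite"
  assumes "f \<in> borel_measurable M"
  shows "(\<lambda>x. f x $ k) \<in> borel_measurable M"
proof -
  have "(\<lambda>v::real^'k. v $ k) \<in> borel_measurable borel"
    by (intro borel_measurable_continuous_onI continuous_intros)
  from measurable_compose[OF assms this] show ?thesis .
qed

theorem theorem1:
  fixes SM :: "'s measure"
    and p0 :: "'s measure"
    and P :: "'s \<Rightarrow> real ^ 'k \<Rightarrow> 's measure"
    and mu' :: "real ^ 'p \<Rightarrow> 's \<Rightarrow> real ^ 'k::finite"
    and \<theta>p :: "real ^ 'p::finite" and b \<sigma> :: "real ^ 'k"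
    and R :: "('s, 'k) traj \<Rightarrow> real"
    and T \<delta> c :: real and N :: nat
  assumes T_pos: "T > 0" and delta_pos: "\<delta> > 0"
    and N_def: "real N = T / \<delta>"
    and p0: "prob_space p0" "sets p0 = sets SM"
    and P_kernel: "(\<lambda>(s, a). P s a) \<in> SM \<Otimes>\<^sub>M borel \<rightarrow>\<^sub>M prob_algebra SM"
    and mu_meas: "(\<lambda>s. mu' \<theta>p s) \<in> SM \<rightarrow>\<^sub>M borel"
    and mu_diff: "\<forall>s\<in>space SM. (\<lambda>p. mu' p s) differentiable (at \<theta>p)"
    and sigma_pos: "\<forall>k. \<sigma> $ k > 0"
    and R_meas: "R \<in> borel_measurable (trajM SM N)"
    and c_pos: "c > 0"
    and cond_var: "\<forall>\<epsilon> :: nat \<Rightarrow> real ^ 'k.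
       ennreal c \<le> ext_variance
         (traj_measure SM p0 (\<lambda>i s. return borel (mu' \<theta>p s + b + \<sigma> * \<epsilon> i)) P N) R"
  shows "ennreal (T * c / (\<delta> * Min (range (\<lambda>k. (\<sigma> $ k)\<^sup>2))))
     \<le> trace_cov (traj_measure SM p0 (\<lambda>i s. gauss_pol (mu' \<theta>p s + b) \<sigma>) P N)
                  (pg_estimator mu' (\<theta>p, b, \<sigma>) N R)"
proof -
  define m where "m = (\<lambda>s. mu' \<theta>p s + b)"
  have m_meas: "m \<in> SM \<rightarrow>\<^sub>M borel"
    unfolding m_def using mu_meas by (intro borel_measurable_add) auto
  define G where "G = traj_measure SM p0 (\<lambda>i s. gauss_pol (mu' \<theta>p s + b) \<sigma>) P N"
  define D where "D = (\<lambda>\<epsilon>. traj_measure SM p0 (\<lambda>i s. return borel (mu' \<theta>p s + b + \<sigma> * \<epsilon> i)) P N)"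
  have "Min (range (\<lambda>k. (\<sigma> $ k)\<^sup>2)) \<in> range (\<lambda>k. (\<sigma> $ k)\<^sup>2)"
    by (rule Min_in) auto
  then obtain k0 where k0: "Min (range (\<lambda>k. (\<sigma> $ k)\<^sup>2)) = (\<sigma> $ k0)\<^sup>2"
    by blast
  define s0 where "s0 = \<sigma> $ k0"
  have s0: "s0 > 0" using sigma_pos by (simp add: s0_def)
  define j where "j = ((0::real^'p), axis k0 (1::real), (0::real^'k))"
  have b1: "axis k0 (1::real) \<in> (Basis :: (real^'k) set)" by (auto simp: Basis_vec_def)
  have b2: "(axis k0 (1::real), (0::real^'k)) \<in> (Basis :: ((real^'k) \<times> (real^'k)) set)"
    using b1 by (auto simp: Basis_prod_def)
  have "j \<in> (\<lambda>v. (0::real^'p, v)) ` (Basis :: ((real^'k) \<times> (real^'k)) set)"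
    unfolding j_def using b2 by (rule imageI)
  then have jB: "j \<in> Basis"
    unfolding Basis_prod_def[where 'a="real^'p" and 'b="(real^'k) \<times> (real^'k)"] by (rule UnI2)
  define X where "X = pg_estimator mu' (\<theta>p, b, \<sigma>) N R"
  define Yf where "Yf = (\<lambda>\<tau>::('s, 'k) traj. R \<tau> * (\<Sum>i<N. (snd \<tau> i $ k0 - m (fst \<tau> i) $ k0) / s0\<^sup>2))"
  have gk: "(\<lambda>(x, y). gauss_pol (m y) \<sigma>) \<in> (count_space UNIV :: unit measure) \<Otimes>\<^sub>M SM \<rightarrow>\<^sub>M prob_algebra borel"
    by (rule gauss_kernel_meas[OF m_meas sigma_pos])
  have "(\<lambda>x::unit. traj_measure SM p0 (\<lambda>i s. gauss_pol (m s) \<sigma>) P N) \<in> count_space UNIV \<rightarrow>\<^sub>M prob_algebra (trajM SM N)"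
    by (rule traj_meas_param[OF _ P_kernel p0]) (rule gk)
  from measurable_space[OF this, of "()"]
  have G_in: "G \<in> space (prob_algebra (trajM SM N))"
    by (simp add: G_def m_def)
  then have G_sets: "sets G = sets (trajM SM N)" and G_ps: "prob_space G"
    by (auto simp: space_prob_algebra)
  have XY: "X \<tau> \<bullet> j = Yf \<tau>" if \<tau>: "\<tau> \<in> space (trajM SM N)" for \<tau>
  proof -
    have "X \<tau> \<bullet> j = R \<tau> * (\<Sum>i<N. grad (\<lambda>th. log_pi mu' th (fst \<tau> i) (snd \<tau> i)) (\<theta>p, b, \<sigma>) \<bullet> j)"
      by (simp add: X_def pg_estimator_def inner_sum_left)
    also have "\<dots> = Yf \<tau>"
      unfolding Yf_def
    proof (intro arg_cong2[where f="(*)"] refl sum.cong)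
      fix i assume "i \<in> {..<N}"
      then have "i \<le> N" by simp
      from measurable_space[OF traj_state_meas[OF this] \<tau>]
      have si: "fst \<tau> i \<in> space SM" .
      show "grad (\<lambda>th. log_pi mu' th (fst \<tau> i) (snd \<tau> i)) (\<theta>p, b, \<sigma>) \<bullet> j
          = (snd \<tau> i $ k0 - m (fst \<tau> i) $ k0) / s0\<^sup>2"
        unfolding j_def m_def s0_def
        by (rule grad_b[of mu' "fst \<tau> i" \<theta>p \<sigma>, OF mu_diff[rule_format, OF si] sigma_pos])
    qed
    finally show ?thesis .
  qed
  have Yf_meas: "Yf \<in> borel_measurable (trajM SM N)"
  proof -
    have "(\<lambda>\<tau>. (snd \<tau> i $ k0 - m (fst \<tau> i) $ k0) / s0\<^sup>2) \<in> borel_measurable (trajM SM N)"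
      if "i \<in> {..<N}" for i
    proof -
      from that have i1: "i < N" and i2: "i \<le> N" by auto
      have a: "(\<lambda>\<tau>. snd \<tau> i $ k0) \<in> borel_measurable (trajM SM N :: ('s, 'k) traj measure)"
        by (rule vnth_meas[OF traj_act_meas[OF i1]])
      have b: "(\<lambda>\<tau>. m (fst \<tau> i) $ k0) \<in> borel_measurable (trajM SM N :: ('s, 'k) traj measure)"
        by (rule vnth_meas[OF measurable_compose[OF traj_state_meas[OF i2] m_meas]])
      show ?thesis using a b by (intro borel_measurable_divide borel_measurable_diff) auto
    qed
    then have "(\<lambda>\<tau>. \<Sum>i<N. (snd \<tau> i $ k0 - m (fst \<tau> i) $ k0) / s0\<^sup>2) \<in> borel_measurable (trajM SM N)"
      by (rule borel_measurable_sum)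
    then show ?thesis
      unfolding Yf_def using R_meas by (intro borel_measurable_times) auto
  qed
  have main: "ennreal (real N * c / s0\<^sup>2) \<le> ext_variance G Yf"
  proof (cases "integrable G Yf")
    case False
    then show ?thesis by (simp add: ext_variance_def)
  next
    case True
    define \<mu> where "\<mu> = (\<integral>y. Yf y \<partial>G)"
    have f_meas: "(\<lambda>\<tau>. ennreal ((Yf \<tau> - \<mu>)\<^sup>2)) \<in> borel_measurable (trajM SM N)"
      using Yf_meas by measurable
    have mix: "G = Emix N \<bind> D"
      unfolding G_def D_def using mixture[OF m_meas sigma_pos P_kernel p0, of N] by (simp add: m_def)
    have Dm: "(\<lambda>\<epsilon>. D \<epsilon>) \<in> (EPS :: (nat \<Rightarrow> real^'k) measure) \<rightarrow>\<^sub>M prob_algebra (trajM SM N)"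
      unfolding D_def
      by (rule traj_meas_param[OF _ P_kernel p0]) (rule det_kernel_meas[OF m_meas[unfolded m_def]], simp add: EPS_def)
    have Esets: "sets (Emix N :: (nat \<Rightarrow> real^'k) measure) = sets (EPS :: (nat \<Rightarrow> real^'k) measure)"
      using Emix_in[of N, unfolded space_prob_algebra] by blast
    have DmE: "D \<in> (Emix N :: (nat \<Rightarrow> real^'k) measure) \<rightarrow>\<^sub>M subprob_algebra (trajM SM N)"
      unfolding measurable_cong_sets[OF Esets refl] using measurable_prob_algebraD[OF Dm] by simp
    define A where "A = (\<lambda>\<epsilon>::nat \<Rightarrow> real^'k. (\<Sum>i<N. \<epsilon> i $ k0) / s0)"
    have per_eps: "ennreal ((A \<epsilon>)\<^sup>2 * c) \<le> (\<integral>\<^sup>+\<tau>. ennreal ((Yf \<tau> - \<mu>)\<^sup>2) \<partial>D \<epsilon>)" for \<epsilon>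
    proof -
      have D_in: "D \<epsilon> \<in> space (prob_algebra (trajM SM N))"
        using measurable_space[OF Dm, of \<epsilon>] by (simp add: EPS_def space_PiM)
      then have D_sets: "sets (D \<epsilon>) = sets (trajM SM N)" and D_ps: "prob_space (D \<epsilon>)"
        by (auto simp: space_prob_algebra)
      have RD: "R \<in> borel_measurable (D \<epsilon>)"
        unfolding measurable_cong_sets[OF D_sets refl] by (rule R_meas)
      have ae: "AE \<tau> in D \<epsilon>. \<forall>i<N. snd \<tau> i = m (fst \<tau> i) + \<sigma> * \<epsilon> i"
        unfolding D_def m_def using det_AE[OF m_meas[unfolded m_def] P_kernel p0, where \<sigma>=\<sigma> and \<epsilon>=\<epsilon> and n=N] by simp
      have "(\<integral>\<^sup>+\<tau>. ennreal ((Yf \<tau> - \<mu>)\<^sup>2) \<partial>D \<epsilon>) = (\<integral>\<^sup>+\<tau>. ennreal ((R \<tau> * A \<epsilon> - \<mu>)\<^sup>2) \<partial>D \<epsilon>)"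
      proof (rule nn_integral_cong_AE)
        show "AE \<tau> in D \<epsilon>. ennreal ((Yf \<tau> - \<mu>)\<^sup>2) = ennreal ((R \<tau> * A \<epsilon> - \<mu>)\<^sup>2)"
          using ae
        proof eventually_elim
          case (elim \<tau>)
          have "(\<Sum>i<N. (snd \<tau> i $ k0 - m (fst \<tau> i) $ k0) / s0\<^sup>2) = (\<Sum>i<N. \<epsilon> i $ k0 / s0)"
          proof (rule sum.cong[OF refl])
            fix i assume "i \<in> {..<N}"
            then have "snd \<tau> i = m (fst \<tau> i) + \<sigma> * \<epsilon> i" using elim by auto
            then have "snd \<tau> i $ k0 - m (fst \<tau> i) $ k0 = s0 * \<epsilon> i $ k0"
              by (simp add: s0_def)
            then show "(snd \<tau> i $ k0 - m (fst \<tau> i) $ k0) / s0\<^sup>2 = \<epsilon> i $ k0 / s0"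
              using s0 by (simp add: power2_eq_square)
          qed
          then show ?case
            by (simp add: Yf_def A_def sum_divide_distrib)
        qed
      qed
      also have "\<dots> \<ge> ennreal ((A \<epsilon>)\<^sup>2 * c)"
        using var_scale_bound[OF D_ps RD _ less_imp_le[OF c_pos], of "A \<epsilon>" \<mu>] cond_var
        by (simp add: D_def)
      finally show ?thesis .
    qed
    have "ext_variance G Yf = (\<integral>\<^sup>+\<tau>. ennreal ((Yf \<tau> - \<mu>)\<^sup>2) \<partial>G)"
      using True by (simp add: ext_variance_def \<mu>_def)
    also have "\<dots> = (\<integral>\<^sup>+\<epsilon>. (\<integral>\<^sup>+\<tau>. ennreal ((Yf \<tau> - \<mu>)\<^sup>2) \<partial>D \<epsilon>) \<partial>Emix N)"
      unfolding mix by (rule nn_integral_bind[OF f_meas DmE])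
    also have "\<dots> \<ge> (\<integral>\<^sup>+\<epsilon>. ennreal ((A \<epsilon>)\<^sup>2 * c) \<partial>(Emix N :: (nat \<Rightarrow> real^'k) measure))"
      by (intro nn_integral_mono per_eps)
    also have "(\<integral>\<^sup>+\<epsilon>. ennreal ((A \<epsilon>)\<^sup>2 * c) \<partial>(Emix N :: (nat \<Rightarrow> real^'k) measure))
        = (\<integral>\<^sup>+\<epsilon>. ennreal (c / s0\<^sup>2) * ennreal ((0 + (\<Sum>i<N. \<epsilon> i $ k0))\<^sup>2) \<partial>(Emix N :: (nat \<Rightarrow> real^'k) measure))"
    proof (intro nn_integral_cong)
      fix \<epsilon> :: "nat \<Rightarrow> real^'k"
      have "(A \<epsilon>)\<^sup>2 * c = (c / s0\<^sup>2) * (0 + (\<Sum>i<N. \<epsilon> i $ k0))\<^sup>2"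
        by (simp add: A_def power_divide)
      have nn: "0 \<le> c / s0\<^sup>2" using c_pos by simp
      show "ennreal ((A \<epsilon>)\<^sup>2 * c) = ennreal (c / s0\<^sup>2) * ennreal ((0 + (\<Sum>i<N. \<epsilon> i $ k0))\<^sup>2)"
        by (subst \<open>(A \<epsilon>)\<^sup>2 * c = (c / s0\<^sup>2) * (0 + (\<Sum>i<N. \<epsilon> i $ k0))\<^sup>2\<close>) (rule ennreal_mult[OF nn zero_le_power2])
    qed
    also have "\<dots> = ennreal (c / s0\<^sup>2) * (\<integral>\<^sup>+\<epsilon>. ennreal ((0 + (\<Sum>i<N. \<epsilon> i $ k0))\<^sup>2) \<partial>(Emix N :: (nat \<Rightarrow> real^'k) measure))"
    proof (rule nn_integral_cmult)
      show "(\<lambda>\<epsilon>::nat \<Rightarrow> real^'k. ennreal ((0 + (\<Sum>i<N. \<epsilon> i $ k0))\<^sup>2)) \<in> borel_measurable (Emix N)"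
        unfolding measurable_cong_sets[OF Esets refl] by measurable
    qed
    also have "\<dots> = ennreal (c / s0\<^sup>2) * ennreal (real N)"
      using Emix_sq[where x=0 and n=N and k=k0] by simp
    also have "\<dots> = ennreal (real N * c / s0\<^sup>2)"
      using c_pos by (simp add: ennreal_mult[symmetric] mult.commute)
    finally show ?thesis .
  qed
  have "ennreal (T * c / (\<delta> * Min (range (\<lambda>k. (\<sigma> $ k)\<^sup>2)))) = ennreal (real N * c / s0\<^sup>2)"
  proof -
    have "T = real N * \<delta>" using N_def delta_pos by (simp add: field_simps)
    then show ?thesis using delta_pos by (simp add: k0 s0_def field_simps)
  qed
  also have "\<dots> \<le> ext_variance G Yf" by (rule main)
  also have "\<dots> = ext_variance G (\<lambda>x. X x \<bullet> j)"
    by (rule ext_var_cong) (use XY sets_eq_imp_space_eq[OF G_sets] in auto)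
  also have "\<dots> \<le> trace_cov G X"
    unfolding trace_cov_def by (rule member_le_sum[OF jB]) auto
  finally show ?thesis by (simp add: G_def X_def)
qed


end
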